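(* Let $0\le t\le 1$ and $u>0$, and let $D=\mathrm{DASEP}(3,3,2)$ with stationary distribution $\mathrm{Pd}$. Suppose that for every partition $\lambda$ with $\lambda_1\le 3$ and exactly $2$ nonzero parts, and all $\mu,\nu\in S_3(\lambda)$, we have $$\frac{\Pr_\lambda(\mu)}{\Pr_\lambda(\nu)}=\frac{\mathrm{Pd}(\mu)}{\mathrm{Pd}(\nu)}.$$ Then $t=1$.
   Context: For a partition $\lambda=(\lambda_1\ge\dots\ge\lambda_n\ge 0)$ of nonnegative integers, $S_n(\lambda)$ denotes the set of all distinct rearrangements of $\lambda$, viewed as words $(\mu_1,\dots,\mu_n)$ whose positions $1,\dots,n$ lie on a circle. Fix $0\le t\le 1$. ASEP($\lambda$) is the Markov chain on $S_n(\lambda)$ with transition probabilities $P_{\mu,\nu}$ defined as follows. If $\mu$ has entries $i\ne j$ in adjacent positions $k,k+1$ ($1\le k\le n-1$) and $\nu$ is obtained from $\mu$ by swapping them, then $P_{\mu,\nu}=t/n$ if $i>j$ and $P_{\mu,\nu}=1/n$ if $i<j$. If $\mu=(i,\mu_2,\dots,\mu_{n-1},j)$ with $i\ne j$ and $\nu=(j,\mu_2,\dots,\mu_{n-1},i)$, then $P_{\mu,\nu}=t/n$ if $j>i$ and $P_{\mu,\nu}=1/n$ if $i>j$. All other off-diagonal transition probabilities are $0$, and the diagonal entries are chosen so that each row sums to $1$. $\Pr_\lambda$ denotes the stationary distribution of ASEP($\lambda$). Fix also $u>0$. For positive integers $n,p,q$ with $n>q$, DASEP$(n,p,q)$ is the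 Markov chain on the set of words in $\{0,1,\dots,p\}^n$ with exactly $q$ nonzero entries (equivalently, the union of $S_n(\lambda)$ over partitions $\lambda$ with $\lambda_1\le p$ and exactly $q$ nonzero parts). Its transition probabilities are as follows. The two swap rules of ASEP apply, with probabilities $t/(3n)$ and $1/(3n)$ in place of $t/n$ and $1/n$. Replacing a single entry $i$ with $1\le i\le p-1$ by $i+1$ has probability $u/(3n)$. Replacing a single entry $i+1$ with $i\ge 1$ by $i$ has probability $1/(3n)$. All other off-diagonal transition probabilities are $0$, and the diagonal entries make each row sum to $1$. $\mathrm{Pd}$ denotes the stationary distribution of the DASEP. *)

theory Defs
  imports Complex_Main "HOL-Library.Multiset"
begin

(* Words are lists of naturals; positions 1..n of the paper are list indices 0..n-1. *)

definition chain_P :: "'a set \<Rightarrow> ('a \<Rightarrow> 'a \<Rightarrow> real) \<Rightarrow> 'a \<Rightarrow> 'a \<Rightarrow> real" where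
  "chain_P S R x y = (if x = y then 1 - (\<Sum>z\<in>S - {x}. R x z) else R x y)"

definition stationary :: "'a set \<Rightarrow> ('a \<Rightarrow> 'a \<Rightarrow> real) \<Rightarrow> ('a \<Rightarrow> real) \<Rightarrow> bool" where
  "stationary S R w \<longleftrightarrow>
     (\<forall>x\<in>S. 0 \<le> w x) \<and> (\<Sum>x\<in>S. w x) = 1 \<and>
     (\<forall>y\<in>S. (\<Sum>x\<in>S. w x * chain_P S R x y) = w y)"

text \<open>Swap rule of the ASEP with rates a (for the "t" moves) and b (for the "1" moves):
  adjacent positions k,k+1 (0-based k < n-1) and the wrap-around pair (first,last).\<close>
definition swap_rate :: "nat \<Rightarrow> real \<Rightarrow> real \<Rightarrow> nat list \<Rightarrow> nat list \<Rightarrow> real" where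
  "swap_rate n a b mu nu =
     (\<Sum>k<n-1. if mu ! k \<noteq> mu ! (k+1) \<and> nu = mu[k := mu ! (k+1), k+1 := mu ! k]
               then (if mu ! k > mu ! (k+1) then a else b) else 0)
     + (if mu ! 0 \<noteq> mu ! (n-1) \<and> nu = mu[0 := mu ! (n-1), n-1 := mu ! 0]
        then (if mu ! (n-1) > mu ! 0 then a else b) else 0)"

definition S_n :: "nat \<Rightarrow> nat list \<Rightarrow> nat list set" where
  "S_n n lam = {mu. length mu = n \<and> mset mu = mset lam}"

definition is_partition :: "nat \<Rightarrow> nat list \<Rightarrow> bool" where
  "is_partition n lam \<longleftrightarrow> length lam = n \<and> sorted_wrt (\<ge>) lam"

definition num_nonzero :: "nat list \<Rightarrow> nat" where
  "num_nonzero mu = length (filter (\<lambda>x. x \<noteq> 0) mu)"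

definition ASEP_rate :: "real \<Rightarrow> nat \<Rightarrow> nat list \<Rightarrow> nat list \<Rightarrow> real" where
  "ASEP_rate t n mu nu = (if mu = nu then 0 else swap_rate n (t / real n) (1 / real n) mu nu)"

definition DASEP_states :: "nat \<Rightarrow> nat \<Rightarrow> nat \<Rightarrow> nat list set" where
  "DASEP_states n p q = {mu. length mu = n \<and> set mu \<subseteq> {0..p} \<and> num_nonzero mu = q}"

definition DASEP_rate :: "real \<Rightarrow> real \<Rightarrow> nat \<Rightarrow> nat \<Rightarrow> nat list \<Rightarrow> nat list \<Rightarrow> real" where
  "DASEP_rate t u n p mu nu =
    (if mu = nu then 0 else
       swap_rate n (t / (3 * real n)) (1 / (3 * real n)) mu nu
     + (\<Sum>k<n. (if 1 \<le> mu ! k \<and> mu ! k \<le> p - 1 \<and> nu = mu[k := mu ! k + 1]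
                then u / (3 * real n) else 0)
             + (if 2 \<le> mu ! k \<and> nu = mu[k := mu ! k - 1]
                then 1 / (3 * real n) else 0)))"

end

theory Submission
  imports Defs
begin

lemma len3: "length xs = 3 \<longleftrightarrow> (\<exists>a b c. xs = [a,b,c])"
  by (auto simp: numeral_3_eq_3 length_Suc_conv)

lemma le3: "(a::nat) \<le> 3 \<longleftrightarrow> a = 0 \<or> a = 1 \<or> a = 2 \<or> a = 3" by auto

definition DL :: "nat list list" where
 "DL = [[0,1,1], [0,1,2], [0,1,3], [0,2,1], [0,2,2], [0,2,3], [0,3,1], [0,3,2], [0,3,3], [1,0,1], [1,0,2], [1,0,3], [1,1,0], [1,2,0], [1,3,0], [2,0,1], [2,0,2], [2,0,3], [2,1,0], [2,2,0], [2,3,0], [3,0,1], [3,0,2], [3,0,3], [3,1,0], [3,2,0], [3,3,0]]"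

lemma DS: "DASEP_states 3 3 2 = set DL"
proof -
  have A: "x \<in> set DL" if "x \<in> DASEP_states 3 3 2" for x
  proof -
    have h: "length x = 3" "set x \<subseteq> {0..3}" "num_nonzero x = 2"
      using that unfolding DASEP_states_def by auto
    obtain a b c where x1: "x = [a,b,c]" using h(1) unfolding len3 by blast
    have x: "x = [a,b,c]" "a \<le> 3" "b \<le> 3" "c \<le> 3" "num_nonzero [a,b,c] = 2"
      using h x1 by auto
    from x(2,3,4) x(5) show ?thesis unfolding x(1) le3
      by (elim disjE) (simp_all add: DL_def num_nonzero_def)
  qed
  have B: "\<forall>x\<in>set DL. x \<in> DASEP_states 3 3 2"
    by (simp add: DL_def DASEP_states_def num_nonzero_def)
  show ?thesis using A B by blast
qed

lemma distDL: "distinct DL" by (simp add: DL_def)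

lemma swap3: "swap_rate 3 a b [p,q,r] nu =
   (if p \<noteq> q \<and> nu = [q,p,r] then (if p > q then a else b) else 0)
 + (if q \<noteq> r \<and> nu = [p,r,q] then (if q > r then a else b) else 0)
 + (if p \<noteq> r \<and> nu = [r,q,p] then (if r > p then a else b) else 0)"
  by (simp add: swap_rate_def numeral_2_eq_2 numeral_3_eq_3)

lemma DASEP3: "DASEP_rate t u 3 3 [p,q,r] nu = (if [p,q,r] = nu then 0 else
   swap_rate 3 (t/9) (1/9) [p,q,r] nu
 + (if 1 \<le> p \<and> p \<le> 2 \<and> nu = [p+1,q,r] then u/9 else 0)
 + (if 2 \<le> p \<and> nu = [p-1,q,r] then 1/9 else 0)
 + (if 1 \<le> q \<and> q \<le> 2 \<and> nu = [p,q+1,r] then u/9 else 0)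
 + (if 2 \<le> q \<and> nu = [p,q-1,r] then 1/9 else 0)
 + (if 1 \<le> r \<and> r \<le> 2 \<and> nu = [p,q,r+1] then u/9 else 0)
 + (if 2 \<le> r \<and> nu = [p,q,r-1] then 1/9 else 0))"
  by (simp add: DASEP_rate_def numeral_2_eq_2 numeral_3_eq_3 algebra_simps)

lemma ASEP3: "ASEP_rate t 3 [p,q,r] nu = (if [p,q,r] = nu then 0 else swap_rate 3 (t/3) (1/3) [p,q,r] nu)"
  by (simp add: ASEP_rate_def)

lemma flow: "finite S \<Longrightarrow> y \<in> S \<Longrightarrow> (\<Sum>x\<in>S. w x * chain_P S R x y) =
   (\<Sum>x\<in>S-{y}. w x * R x y) + w y - w y * (\<Sum>z\<in>S-{y}. R y z)"
  by (simp add: sum.remove[of S y] chain_P_def algebra_simps)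

lemma sumL: "distinct L \<Longrightarrow> (\<Sum>x\<in>set L - {y}. f x) = sum_list (map f (removeAll y L))"
proof -
  assume d: "distinct L"
  have "set L - {y} = set (removeAll y L)" by simp
  moreover have "distinct (removeAll y L)" using d by (simp add: distinct_removeAll)
  ultimately show ?thesis by (simp only: sum.distinct_set_conv_list)
qed

lemma Leq: "distinct L \<Longrightarrow> \<forall>y\<in>set L. (\<Sum>x\<in>set L. Q x * chain_P (set L) R x y) = Q y \<Longrightarrow> y \<in> set L \<Longrightarrow>
  sum_list (map (\<lambda>x. Q x * R x y) (removeAll y L)) = Q y * sum_list (map (R y) (removeAll y L))"
proof -
  assume d: "distinct L" and b: "\<forall>y\<in>set L. (\<Sum>x\<in>set L. Q x * chain_P (set L) R x y) = Q y"
    and y: "y \<in> set L"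
  have "(\<Sum>x\<in>set L. Q x * chain_P (set L) R x y) = Q y" using b y by (rule bspec)
  moreover have "(\<Sum>x\<in>set L. Q x * chain_P (set L) R x y) =
     (\<Sum>x\<in>set L-{y}. Q x * R x y) + Q y - Q y * (\<Sum>z\<in>set L-{y}. R y z)"
    by (rule flow) (simp_all add: y)
  ultimately have "(\<Sum>x\<in>set L-{y}. Q x * R x y) = Q y * (\<Sum>z\<in>set L-{y}. R y z)" by simp
  then show ?thesis by (simp only: sumL[OF d])
qed

lemma Deq: "stationary (DASEP_states 3 3 2) (DASEP_rate t u 3 3) Pd \<Longrightarrow> y \<in> set DL \<Longrightarrow>
  sum_list (map (\<lambda>x. Pd x * DASEP_rate t u 3 3 x y) (removeAll y DL)) =
  Pd y * sum_list (map (\<lambda>z. DASEP_rate t u 3 3 y z) (removeAll y DL))"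
  unfolding stationary_def DS by (rule Leq[OF distDL]) (elim conjE, assumption)+

lemma Aeq: "distinct L \<Longrightarrow> S_n 3 lam = set L \<Longrightarrow>
  \<forall>y\<in>S_n 3 lam. (\<Sum>x\<in>S_n 3 lam. Q x * chain_P (S_n 3 lam) (ASEP_rate t 3) x y) = Q y \<Longrightarrow> y \<in> set L \<Longrightarrow>
  sum_list (map (\<lambda>x. Q x * ASEP_rate t 3 x y) (removeAll y L)) = Q y * sum_list (map (\<lambda>z. ASEP_rate t 3 y z) (removeAll y L))"
  by (simp only: Leq)

lemma propl:
  assumes "finite S" "stationary S R P" "\<forall>mu\<in>S. \<forall>nu\<in>S. P mu / P nu = Q mu / Q nu"
  shows "(\<forall>y\<in>S. (\<Sum>x\<in>S. Q x * chain_P S R x y) = Q y) \<and> (\<exists>c. c \<noteq> 0 \<and> (\<forall>x\<in>S. P x = c * Q x))"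
proof -
  from assms(2) have s1: "sum P S = 1" and bal: "\<forall>y\<in>S. (\<Sum>x\<in>S. P x * chain_P S R x y) = P y"
    by (auto simp: stationary_def)
  have "\<exists>y0\<in>S. P y0 \<noteq> 0"
  proof (rule ccontr)
    assume "\<not> (\<exists>y0\<in>S. P y0 \<noteq> 0)"
    then have "sum P S = 0" by simp
    then show False using s1 by simp
  qed
  then obtain y0 where y0: "y0 \<in> S" "P y0 \<noteq> 0" by blast
  have "Q y0 / Q y0 = 1" using assms(3) y0 by (metis divide_self)
  then have Qy0: "Q y0 \<noteq> 0" by auto
  define c where "c = P y0 / Q y0"
  have c0: "c \<noteq> 0" using y0 Qy0 by (simp add: c_def)
  have Px: "P x = c * Q x" if "x \<in> S" for x
  proof -
    have "P x / P y0 = Q x / Q y0" using assms(3) that y0 by blast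
    then have "P x = Q x / Q y0 * P y0" using y0(2) by (simp add: divide_eq_eq)
    then show ?thesis by (simp add: c_def)
  qed
  have "(\<Sum>x\<in>S. Q x * chain_P S R x y) = Q y" if y: "y \<in> S" for y
  proof -
    have "(\<Sum>x\<in>S. P x * chain_P S R x y) = (\<Sum>x\<in>S. c * (Q x * chain_P S R x y))"
      by (rule sum.cong) (simp_all add: Px)
    then have "c * (\<Sum>x\<in>S. Q x * chain_P S R x y) = (\<Sum>x\<in>S. P x * chain_P S R x y)"
      by (simp add: sum_distrib_left)
    also have "\<dots> = P y" using bal y by blast
    also have "\<dots> = c * Q y" using Px y by blast
    finally show ?thesis using c0 by simp
  qed
  then show ?thesis using c0 Px by blast
qed

lemma poly: assumes "0 < u" "(2*u+1)*d12 = d13" "(u+1)*d13 = d23 + u*d12" "(u+2)*d23 = u*d13"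
  shows "d12 = (0::real)"
proof -
  have d13: "d13 = (2*u+1)*d12" using assms(2) by simp
  have d23: "d23 = (u+1)*d13 - u*d12" using assms(3) by simp
  have "(u+2)*((u+1)*((2*u+1)*d12) - u*d12) = u*((2*u+1)*d12)"
    using assms(4) d23 d13 by simp
  moreover have "(2*u^3+4*u^2+4*u+2)*d12 = (u+2)*((u+1)*((2*u+1)*d12) - u*d12) - u*((2*u+1)*d12)"
    by (simp add: algebra_simps power2_eq_square power3_eq_cube)
  ultimately have "(2*u^3+4*u^2+4*u+2)*d12 = 0" by simp
  moreover have "2*u^3+4*u^2+4*u+2 > 0" using assms(1) by (simp add: add_pos_pos)
  ultimately show ?thesis by simp
qed

lemma sym_level:
  fixes u ya yb yc yd ye yf yg yh yk :: real
  assumes "0<u"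
   "2*(u*yb) + yb = ye + u*ya + yc"
   "2*(u*yd) + yd = ye + u*ya + yg"
   "u*yc + yc = yf + u*yb"
   "u*yg + yg = yh + u*yd"
   "u*yf + 2*yf = u*yc + yk + u*ye"
   "u*yh + 2*yh = u*yg + yk + u*ye"
  shows "yb = yd"
proof -
  have "(2*u+1)*(yb-yd) = 2*(u*yb) + yb - (2*(u*yd) + yd)" by (simp add: algebra_simps)
  then have E1: "(2*u+1)*(yb-yd) = yc - yg" using assms(2,3) by linarith
  have "(u+1)*(yc-yg) = u*yc + yc - (u*yg + yg)" "u*(yb-yd) = u*yb - u*yd" by (simp_all add: algebra_simps)
  then have E2: "(u+1)*(yc-yg) = (yf-yh) + u*(yb-yd)" using assms(4,5) by linarith
  have "(u+2)*(yf-yh) = u*yf + 2*yf - (u*yh + 2*yh)" "u*(yc-yg) = u*yc - u*yg" by (simp_all add: algebra_simps)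
  then have E3: "(u+2)*(yf-yh) = u*(yc-yg)" using assms(6,7) by linarith
  have "yb - yd = 0" by (rule poly[OF assms(1) E1 E2 E3])
  then show ?thesis by simp
qed

lemma Sn210: "S_n 3 [2,1,0] = set [[2,1,0],[2,0,1],[1,2,0],[1,0,2],[0,2,1],[0,1,2]]"
proof -
  have "x \<in> S_n 3 [2,1,0] \<longleftrightarrow> x \<in> set [[2,1,0],[2,0,1],[1,2,0],[1,0,2],[0,2,1],[0,1,2]]" for x
  proof
    assume "x \<in> S_n 3 [2,1,0]"
    then obtain a b c where x: "x = [a,b,c]" "mset [a,b,c] = mset [2,1,0]"
      unfolding S_n_def len3 by auto
    then have "set [a,b,c] = set [2,1,0]" by (metis set_mset_mset)
    then have "a \<in> {0,1,2}" "b \<in> {0,1,2}" "c \<in> {0,1,2}" by (simp_all only: list.set) blast+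
    moreover have "distinct [a,b,c]" using mset_eq_imp_distinct_iff[OF x(2)] by simp
    ultimately show "x \<in> set [[2,1,0],[2,0,1],[1,2,0],[1,0,2],[0,2,1],[0,1,2]]" using x(1) by auto
  next
    assume "x \<in> set [[2,1,0],[2,0,1],[1,2,0],[1,0,2],[0,2,1],[0,1,2]]" then show "x \<in> S_n 3 [2,1,0]"
      by (auto simp: S_n_def)
  qed
  then show ?thesis by blast
qed

lemma dist210: "distinct ([[2,1,0],[2,0,1],[1,2,0],[1,0,2],[0,2,1],[0,1,2]] :: nat list list)" by simp

lemma Sn310: "S_n 3 [3,1,0] = set [[3,1,0],[3,0,1],[1,3,0],[1,0,3],[0,3,1],[0,1,3]]"
proof -
  have "x \<in> S_n 3 [3,1,0] \<longleftrightarrow> x \<in> set [[3,1,0],[3,0,1],[1,3,0],[1,0,3],[0,3,1],[0,1,3]]" for x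
  proof
    assume "x \<in> S_n 3 [3,1,0]"
    then obtain a b c where x: "x = [a,b,c]" "mset [a,b,c] = mset [3,1,0]"
      unfolding S_n_def len3 by auto
    then have "set [a,b,c] = set [3,1,0]" by (metis set_mset_mset)
    then have "a \<in> {0,1,3}" "b \<in> {0,1,3}" "c \<in> {0,1,3}" by (simp_all only: list.set) blast+
    moreover have "distinct [a,b,c]" using mset_eq_imp_distinct_iff[OF x(2)] by simp
    ultimately show "x \<in> set [[3,1,0],[3,0,1],[1,3,0],[1,0,3],[0,3,1],[0,1,3]]" using x(1) by auto
  next
    assume "x \<in> set [[3,1,0],[3,0,1],[1,3,0],[1,0,3],[0,3,1],[0,1,3]]" then show "x \<in> S_n 3 [3,1,0]"
      by (auto simp: S_n_def)
  qed
  then show ?thesis by blast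
qed

lemma dist310: "distinct ([[3,1,0],[3,0,1],[1,3,0],[1,0,3],[0,3,1],[0,1,3]] :: nat list list)" by simp

lemma Sn320: "S_n 3 [3,2,0] = set [[3,2,0],[3,0,2],[2,3,0],[2,0,3],[0,3,2],[0,2,3]]"
proof -
  have "x \<in> S_n 3 [3,2,0] \<longleftrightarrow> x \<in> set [[3,2,0],[3,0,2],[2,3,0],[2,0,3],[0,3,2],[0,2,3]]" for x
  proof
    assume "x \<in> S_n 3 [3,2,0]"
    then obtain a b c where x: "x = [a,b,c]" "mset [a,b,c] = mset [3,2,0]"
      unfolding S_n_def len3 by auto
    then have "set [a,b,c] = set [3,2,0]" by (metis set_mset_mset)
    then have "a \<in> {0,2,3}" "b \<in> {0,2,3}" "c \<in> {0,2,3}" by (simp_all only: list.set) blast+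
    moreover have "distinct [a,b,c]" using mset_eq_imp_distinct_iff[OF x(2)] by simp
    ultimately show "x \<in> set [[3,2,0],[3,0,2],[2,3,0],[2,0,3],[0,3,2],[0,2,3]]" using x(1) by auto
  next
    assume "x \<in> set [[3,2,0],[3,0,2],[2,3,0],[2,0,3],[0,3,2],[0,2,3]]" then show "x \<in> S_n 3 [3,2,0]"
      by (auto simp: S_n_def)
  qed
  then show ?thesis by blast
qed

lemma dist320: "distinct ([[3,2,0],[3,0,2],[2,3,0],[2,0,3],[0,3,2],[0,2,3]] :: nat list list)" by simp

lemma lD210: assumes st: "stationary (DASEP_states 3 3 2) (DASEP_rate t u 3 3) Pd"
  shows "t*Pd [0,1,2] + u*Pd [1,1,0] + Pd [1,2,0] + Pd [2,0,1] + Pd [2,2,0] + Pd [3,1,0] = 2*Pd [2,1,0] + 2*(t*Pd [2,1,0]) + 2*(u*Pd [2,1,0])"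
  using Deq[OF st, of "[2,1,0]"] apply (simp add: DL_def swap3 DASEP3) by (simp add: algebra_simps)

lemma lA210: assumes b: "\<forall>y\<in>S_n 3 [2,1,0]. (\<Sum>x\<in>S_n 3 [2,1,0]. Pd x * chain_P (S_n 3 [2,1,0]) (ASEP_rate t 3) x y) = Pd y"
  shows "Pd [2,0,1] + Pd [1,2,0] + t*Pd [0,1,2] = Pd [2,1,0] + 2*(t*Pd [2,1,0])"
  using Aeq[OF dist210 Sn210 b, of "[2,1,0]"] apply (simp add: ASEP3 swap3) by (simp add: algebra_simps)

lemma lD201: assumes st: "stationary (DASEP_states 3 3 2) (DASEP_rate t u 3 3) Pd"
  shows "Pd [0,2,1] + u*Pd [1,0,1] + t*Pd [1,0,2] + Pd [2,0,2] + t*Pd [2,1,0] + Pd [3,0,1] = 3*Pd [2,0,1] + t*Pd [2,0,1] + 2*(u*Pd [2,0,1])"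
  using Deq[OF st, of "[2,0,1]"] apply (simp add: DL_def swap3 DASEP3) by (simp add: algebra_simps)

lemma lA201: assumes b: "\<forall>y\<in>S_n 3 [2,1,0]. (\<Sum>x\<in>S_n 3 [2,1,0]. Pd x * chain_P (S_n 3 [2,1,0]) (ASEP_rate t 3) x y) = Pd y"
  shows "t*Pd [2,1,0] + t*Pd [1,0,2] + Pd [0,2,1] = 2*Pd [2,0,1] + t*Pd [2,0,1]"
  using Aeq[OF dist210 Sn210 b, of "[2,0,1]"] apply (simp add: ASEP3 swap3) by (simp add: algebra_simps)

lemma lD120: assumes st: "stationary (DASEP_states 3 3 2) (DASEP_rate t u 3 3) Pd"
  shows "t*Pd [0,2,1] + Pd [1,0,2] + u*Pd [1,1,0] + Pd [1,3,0] + t*Pd [2,1,0] + Pd [2,2,0] = 3*Pd [1,2,0] + t*Pd [1,2,0] + 2*(u*Pd [1,2,0])"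
  using Deq[OF st, of "[1,2,0]"] apply (simp add: DL_def swap3 DASEP3) by (simp add: algebra_simps)

lemma lA120: assumes b: "\<forall>y\<in>S_n 3 [2,1,0]. (\<Sum>x\<in>S_n 3 [2,1,0]. Pd x * chain_P (S_n 3 [2,1,0]) (ASEP_rate t 3) x y) = Pd y"
  shows "t*Pd [2,1,0] + Pd [1,0,2] + t*Pd [0,2,1] = 2*Pd [1,2,0] + t*Pd [1,2,0]"
  using Aeq[OF dist210 Sn210 b, of "[1,2,0]"] apply (simp add: ASEP3 swap3) by (simp add: algebra_simps)

lemma lD102: assumes st: "stationary (DASEP_states 3 3 2) (DASEP_rate t u 3 3) Pd"
  shows "Pd [0,1,2] + u*Pd [1,0,1] + Pd [1,0,3] + t*Pd [1,2,0] + Pd [2,0,1] + Pd [2,0,2] = 2*Pd [1,0,2] + 2*(t*Pd [1,0,2]) + 2*(u*Pd [1,0,2])"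
  using Deq[OF st, of "[1,0,2]"] apply (simp add: DL_def swap3 DASEP3) by (simp add: algebra_simps)

lemma lA102: assumes b: "\<forall>y\<in>S_n 3 [2,1,0]. (\<Sum>x\<in>S_n 3 [2,1,0]. Pd x * chain_P (S_n 3 [2,1,0]) (ASEP_rate t 3) x y) = Pd y"
  shows "Pd [2,0,1] + t*Pd [1,2,0] + Pd [0,1,2] = Pd [1,0,2] + 2*(t*Pd [1,0,2])"
  using Aeq[OF dist210 Sn210 b, of "[1,0,2]"] apply (simp add: ASEP3 swap3) by (simp add: algebra_simps)

lemma lD021: assumes st: "stationary (DASEP_states 3 3 2) (DASEP_rate t u 3 3) Pd"
  shows "u*Pd [0,1,1] + Pd [0,1,2] + Pd [0,2,2] + Pd [0,3,1] + Pd [1,2,0] + t*Pd [2,0,1] = 2*Pd [0,2,1] + 2*(t*Pd [0,2,1]) + 2*(u*Pd [0,2,1])"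
  using Deq[OF st, of "[0,2,1]"] apply (simp add: DL_def swap3 DASEP3) by (simp add: algebra_simps)

lemma lA021: assumes b: "\<forall>y\<in>S_n 3 [2,1,0]. (\<Sum>x\<in>S_n 3 [2,1,0]. Pd x * chain_P (S_n 3 [2,1,0]) (ASEP_rate t 3) x y) = Pd y"
  shows "t*Pd [2,0,1] + Pd [1,2,0] + Pd [0,1,2] = Pd [0,2,1] + 2*(t*Pd [0,2,1])"
  using Aeq[OF dist210 Sn210 b, of "[0,2,1]"] apply (simp add: ASEP3 swap3) by (simp add: algebra_simps)

lemma lD012: assumes st: "stationary (DASEP_states 3 3 2) (DASEP_rate t u 3 3) Pd"
  shows "u*Pd [0,1,1] + Pd [0,1,3] + t*Pd [0,2,1] + Pd [0,2,2] + t*Pd [1,0,2] + Pd [2,1,0] = 3*Pd [0,1,2] + t*Pd [0,1,2] + 2*(u*Pd [0,1,2])"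
  using Deq[OF st, of "[0,1,2]"] apply (simp add: DL_def swap3 DASEP3) by (simp add: algebra_simps)

lemma lA012: assumes b: "\<forall>y\<in>S_n 3 [2,1,0]. (\<Sum>x\<in>S_n 3 [2,1,0]. Pd x * chain_P (S_n 3 [2,1,0]) (ASEP_rate t 3) x y) = Pd y"
  shows "Pd [2,1,0] + t*Pd [1,0,2] + t*Pd [0,2,1] = 2*Pd [0,1,2] + t*Pd [0,1,2]"
  using Aeq[OF dist210 Sn210 b, of "[0,1,2]"] apply (simp add: ASEP3 swap3) by (simp add: algebra_simps)

lemma lD310: assumes st: "stationary (DASEP_states 3 3 2) (DASEP_rate t u 3 3) Pd"
  shows "t*Pd [0,1,3] + Pd [1,3,0] + u*Pd [2,1,0] + Pd [3,0,1] + Pd [3,2,0] = 2*Pd [3,1,0] + 2*(t*Pd [3,1,0]) + u*Pd [3,1,0]"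
  using Deq[OF st, of "[3,1,0]"] apply (simp add: DL_def swap3 DASEP3) by (simp add: algebra_simps)

lemma lA310: assumes b: "\<forall>y\<in>S_n 3 [3,1,0]. (\<Sum>x\<in>S_n 3 [3,1,0]. Pd x * chain_P (S_n 3 [3,1,0]) (ASEP_rate t 3) x y) = Pd y"
  shows "Pd [3,0,1] + Pd [1,3,0] + t*Pd [0,1,3] = Pd [3,1,0] + 2*(t*Pd [3,1,0])"
  using Aeq[OF dist310 Sn310 b, of "[3,1,0]"] apply (simp add: ASEP3 swap3) by (simp add: algebra_simps)

lemma lD301: assumes st: "stationary (DASEP_states 3 3 2) (DASEP_rate t u 3 3) Pd"
  shows "Pd [0,3,1] + t*Pd [1,0,3] + u*Pd [2,0,1] + Pd [3,0,2] + t*Pd [3,1,0] = 3*Pd [3,0,1] + t*Pd [3,0,1] + u*Pd [3,0,1]"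
  using Deq[OF st, of "[3,0,1]"] apply (simp add: DL_def swap3 DASEP3) by (simp add: algebra_simps)

lemma lA301: assumes b: "\<forall>y\<in>S_n 3 [3,1,0]. (\<Sum>x\<in>S_n 3 [3,1,0]. Pd x * chain_P (S_n 3 [3,1,0]) (ASEP_rate t 3) x y) = Pd y"
  shows "t*Pd [3,1,0] + t*Pd [1,0,3] + Pd [0,3,1] = 2*Pd [3,0,1] + t*Pd [3,0,1]"
  using Aeq[OF dist310 Sn310 b, of "[3,0,1]"] apply (simp add: ASEP3 swap3) by (simp add: algebra_simps)

lemma lD130: assumes st: "stationary (DASEP_states 3 3 2) (DASEP_rate t u 3 3) Pd"
  shows "t*Pd [0,3,1] + Pd [1,0,3] + u*Pd [1,2,0] + Pd [2,3,0] + t*Pd [3,1,0] = 3*Pd [1,3,0] + t*Pd [1,3,0] + u*Pd [1,3,0]"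
  using Deq[OF st, of "[1,3,0]"] apply (simp add: DL_def swap3 DASEP3) by (simp add: algebra_simps)

lemma lA130: assumes b: "\<forall>y\<in>S_n 3 [3,1,0]. (\<Sum>x\<in>S_n 3 [3,1,0]. Pd x * chain_P (S_n 3 [3,1,0]) (ASEP_rate t 3) x y) = Pd y"
  shows "t*Pd [3,1,0] + Pd [1,0,3] + t*Pd [0,3,1] = 2*Pd [1,3,0] + t*Pd [1,3,0]"
  using Aeq[OF dist310 Sn310 b, of "[1,3,0]"] apply (simp add: ASEP3 swap3) by (simp add: algebra_simps)

lemma lD103: assumes st: "stationary (DASEP_states 3 3 2) (DASEP_rate t u 3 3) Pd"
  shows "Pd [0,1,3] + u*Pd [1,0,2] + t*Pd [1,3,0] + Pd [2,0,3] + Pd [3,0,1] = 2*Pd [1,0,3] + 2*(t*Pd [1,0,3]) + u*Pd [1,0,3]"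
  using Deq[OF st, of "[1,0,3]"] apply (simp add: DL_def swap3 DASEP3) by (simp add: algebra_simps)

lemma lA103: assumes b: "\<forall>y\<in>S_n 3 [3,1,0]. (\<Sum>x\<in>S_n 3 [3,1,0]. Pd x * chain_P (S_n 3 [3,1,0]) (ASEP_rate t 3) x y) = Pd y"
  shows "Pd [3,0,1] + t*Pd [1,3,0] + Pd [0,1,3] = Pd [1,0,3] + 2*(t*Pd [1,0,3])"
  using Aeq[OF dist310 Sn310 b, of "[1,0,3]"] apply (simp add: ASEP3 swap3) by (simp add: algebra_simps)

lemma lD031: assumes st: "stationary (DASEP_states 3 3 2) (DASEP_rate t u 3 3) Pd"
  shows "Pd [0,1,3] + u*Pd [0,2,1] + Pd [0,3,2] + Pd [1,3,0] + t*Pd [3,0,1] = 2*Pd [0,3,1] + 2*(t*Pd [0,3,1]) + u*Pd [0,3,1]"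
  using Deq[OF st, of "[0,3,1]"] apply (simp add: DL_def swap3 DASEP3) by (simp add: algebra_simps)

lemma lA031: assumes b: "\<forall>y\<in>S_n 3 [3,1,0]. (\<Sum>x\<in>S_n 3 [3,1,0]. Pd x * chain_P (S_n 3 [3,1,0]) (ASEP_rate t 3) x y) = Pd y"
  shows "t*Pd [3,0,1] + Pd [1,3,0] + Pd [0,1,3] = Pd [0,3,1] + 2*(t*Pd [0,3,1])"
  using Aeq[OF dist310 Sn310 b, of "[0,3,1]"] apply (simp add: ASEP3 swap3) by (simp add: algebra_simps)

lemma lD013: assumes st: "stationary (DASEP_states 3 3 2) (DASEP_rate t u 3 3) Pd"
  shows "u*Pd [0,1,2] + Pd [0,2,3] + t*Pd [0,3,1] + t*Pd [1,0,3] + Pd [3,1,0] = 3*Pd [0,1,3] + t*Pd [0,1,3] + u*Pd [0,1,3]"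
  using Deq[OF st, of "[0,1,3]"] apply (simp add: DL_def swap3 DASEP3) by (simp add: algebra_simps)

lemma lA013: assumes b: "\<forall>y\<in>S_n 3 [3,1,0]. (\<Sum>x\<in>S_n 3 [3,1,0]. Pd x * chain_P (S_n 3 [3,1,0]) (ASEP_rate t 3) x y) = Pd y"
  shows "Pd [3,1,0] + t*Pd [1,0,3] + t*Pd [0,3,1] = 2*Pd [0,1,3] + t*Pd [0,1,3]"
  using Aeq[OF dist310 Sn310 b, of "[0,1,3]"] apply (simp add: ASEP3 swap3) by (simp add: algebra_simps)

lemma lD320: assumes st: "stationary (DASEP_states 3 3 2) (DASEP_rate t u 3 3) Pd"
  shows "t*Pd [0,2,3] + u*Pd [2,2,0] + Pd [2,3,0] + Pd [3,0,2] + u*Pd [3,1,0] + Pd [3,3,0] = 3*Pd [3,2,0] + 2*(t*Pd [3,2,0]) + u*Pd [3,2,0]"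
  using Deq[OF st, of "[3,2,0]"] apply (simp add: DL_def swap3 DASEP3) by (simp add: algebra_simps)

lemma lA320: assumes b: "\<forall>y\<in>S_n 3 [3,2,0]. (\<Sum>x\<in>S_n 3 [3,2,0]. Pd x * chain_P (S_n 3 [3,2,0]) (ASEP_rate t 3) x y) = Pd y"
  shows "Pd [3,0,2] + Pd [2,3,0] + t*Pd [0,2,3] = Pd [3,2,0] + 2*(t*Pd [3,2,0])"
  using Aeq[OF dist320 Sn320 b, of "[3,2,0]"] apply (simp add: ASEP3 swap3) by (simp add: algebra_simps)

lemma lD302: assumes st: "stationary (DASEP_states 3 3 2) (DASEP_rate t u 3 3) Pd"
  shows "Pd [0,3,2] + u*Pd [2,0,2] + t*Pd [2,0,3] + u*Pd [3,0,1] + Pd [3,0,3] + t*Pd [3,2,0] = 4*Pd [3,0,2] + t*Pd [3,0,2] + u*Pd [3,0,2]"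
  using Deq[OF st, of "[3,0,2]"] apply (simp add: DL_def swap3 DASEP3) by (simp add: algebra_simps)

lemma lA302: assumes b: "\<forall>y\<in>S_n 3 [3,2,0]. (\<Sum>x\<in>S_n 3 [3,2,0]. Pd x * chain_P (S_n 3 [3,2,0]) (ASEP_rate t 3) x y) = Pd y"
  shows "t*Pd [3,2,0] + t*Pd [2,0,3] + Pd [0,3,2] = 2*Pd [3,0,2] + t*Pd [3,0,2]"
  using Aeq[OF dist320 Sn320 b, of "[3,0,2]"] apply (simp add: ASEP3 swap3) by (simp add: algebra_simps)

lemma lD230: assumes st: "stationary (DASEP_states 3 3 2) (DASEP_rate t u 3 3) Pd"
  shows "t*Pd [0,3,2] + u*Pd [1,3,0] + Pd [2,0,3] + u*Pd [2,2,0] + t*Pd [3,2,0] + Pd [3,3,0] = 4*Pd [2,3,0] + t*Pd [2,3,0] + u*Pd [2,3,0]"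
  using Deq[OF st, of "[2,3,0]"] apply (simp add: DL_def swap3 DASEP3) by (simp add: algebra_simps)

lemma lA230: assumes b: "\<forall>y\<in>S_n 3 [3,2,0]. (\<Sum>x\<in>S_n 3 [3,2,0]. Pd x * chain_P (S_n 3 [3,2,0]) (ASEP_rate t 3) x y) = Pd y"
  shows "t*Pd [3,2,0] + Pd [2,0,3] + t*Pd [0,3,2] = 2*Pd [2,3,0] + t*Pd [2,3,0]"
  using Aeq[OF dist320 Sn320 b, of "[2,3,0]"] apply (simp add: ASEP3 swap3) by (simp add: algebra_simps)

lemma lD203: assumes st: "stationary (DASEP_states 3 3 2) (DASEP_rate t u 3 3) Pd"
  shows "Pd [0,2,3] + u*Pd [1,0,3] + u*Pd [2,0,2] + t*Pd [2,3,0] + Pd [3,0,2] + Pd [3,0,3] = 3*Pd [2,0,3] + 2*(t*Pd [2,0,3]) + u*Pd [2,0,3]"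
  using Deq[OF st, of "[2,0,3]"] apply (simp add: DL_def swap3 DASEP3) by (simp add: algebra_simps)

lemma lA203: assumes b: "\<forall>y\<in>S_n 3 [3,2,0]. (\<Sum>x\<in>S_n 3 [3,2,0]. Pd x * chain_P (S_n 3 [3,2,0]) (ASEP_rate t 3) x y) = Pd y"
  shows "Pd [3,0,2] + t*Pd [2,3,0] + Pd [0,2,3] = Pd [2,0,3] + 2*(t*Pd [2,0,3])"
  using Aeq[OF dist320 Sn320 b, of "[2,0,3]"] apply (simp add: ASEP3 swap3) by (simp add: algebra_simps)

lemma lD032: assumes st: "stationary (DASEP_states 3 3 2) (DASEP_rate t u 3 3) Pd"
  shows "u*Pd [0,2,2] + Pd [0,2,3] + u*Pd [0,3,1] + Pd [0,3,3] + Pd [2,3,0] + t*Pd [3,0,2] = 3*Pd [0,3,2] + 2*(t*Pd [0,3,2]) + u*Pd [0,3,2]"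
  using Deq[OF st, of "[0,3,2]"] apply (simp add: DL_def swap3 DASEP3) by (simp add: algebra_simps)

lemma lA032: assumes b: "\<forall>y\<in>S_n 3 [3,2,0]. (\<Sum>x\<in>S_n 3 [3,2,0]. Pd x * chain_P (S_n 3 [3,2,0]) (ASEP_rate t 3) x y) = Pd y"
  shows "t*Pd [3,0,2] + Pd [2,3,0] + Pd [0,2,3] = Pd [0,3,2] + 2*(t*Pd [0,3,2])"
  using Aeq[OF dist320 Sn320 b, of "[0,3,2]"] apply (simp add: ASEP3 swap3) by (simp add: algebra_simps)

lemma lD023: assumes st: "stationary (DASEP_states 3 3 2) (DASEP_rate t u 3 3) Pd"
  shows "u*Pd [0,1,3] + u*Pd [0,2,2] + t*Pd [0,3,2] + Pd [0,3,3] + t*Pd [2,0,3] + Pd [3,2,0] = 4*Pd [0,2,3] + t*Pd [0,2,3] + u*Pd [0,2,3]"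
  using Deq[OF st, of "[0,2,3]"] apply (simp add: DL_def swap3 DASEP3) by (simp add: algebra_simps)

lemma lA023: assumes b: "\<forall>y\<in>S_n 3 [3,2,0]. (\<Sum>x\<in>S_n 3 [3,2,0]. Pd x * chain_P (S_n 3 [3,2,0]) (ASEP_rate t 3) x y) = Pd y"
  shows "Pd [3,2,0] + t*Pd [2,0,3] + t*Pd [0,3,2] = 2*Pd [0,2,3] + t*Pd [0,2,3]"
  using Aeq[OF dist320 Sn320 b, of "[0,2,3]"] apply (simp add: ASEP3 swap3) by (simp add: algebra_simps)

theorem mainTheorem2:
  fixes t u :: real and Pd :: "nat list \<Rightarrow> real" and Pr :: "nat list \<Rightarrow> nat list \<Rightarrow> real"
  assumes "0 \<le> t" and "t \<le> 1" and "0 < u"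
    and "stationary (DASEP_states 3 3 2) (DASEP_rate t u 3 3) Pd"
    and "\<forall>lam. is_partition 3 lam \<and> lam ! 0 \<le> 3 \<and> num_nonzero lam = 2 \<longrightarrow>
            stationary (S_n 3 lam) (ASEP_rate t 3) (Pr lam)"
    and "\<forall>lam. is_partition 3 lam \<and> lam ! 0 \<le> 3 \<and> num_nonzero lam = 2 \<longrightarrow>
            (\<forall>mu\<in>S_n 3 lam. \<forall>nu\<in>S_n 3 lam. Pr lam mu / Pr lam nu = Pd mu / Pd nu)"
  shows "t = 1"
proof (rule ccontr)
  assume tne: "t \<noteq> 1"
  note st = assms(4)
  have part210: "is_partition 3 [2,1,0] \<and> ([2,1,0]::nat list) ! 0 \<le> 3 \<and> num_nonzero [2,1,0] = 2"
    by (simp add: is_partition_def num_nonzero_def)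
  have P210: "(\<forall>y\<in>S_n 3 [2,1,0]. (\<Sum>x\<in>S_n 3 [2,1,0]. Pd x * chain_P (S_n 3 [2,1,0]) (ASEP_rate t 3) x y) = Pd y) \<and> (\<exists>c. c \<noteq> 0 \<and> (\<forall>x\<in>S_n 3 [2,1,0]. Pr [2,1,0] x = c * Pd x))"
    apply (rule propl)
      apply (simp only: Sn210 List.finite_set)
     apply (rule mp[OF spec[OF assms(5), of "[2,1,0]"] part210])
    apply (rule mp[OF spec[OF assms(6), of "[2,1,0]"] part210])
    done
  have part310: "is_partition 3 [3,1,0] \<and> ([3,1,0]::nat list) ! 0 \<le> 3 \<and> num_nonzero [3,1,0] = 2"
    by (simp add: is_partition_def num_nonzero_def)
  have P310: "(\<forall>y\<in>S_n 3 [3,1,0]. (\<Sum>x\<in>S_n 3 [3,1,0]. Pd x * chain_P (S_n 3 [3,1,0]) (ASEP_rate t 3) x y) = Pd y) \<and> (\<exists>c. c \<noteq> 0 \<and> (\<forall>x\<in>S_n 3 [3,1,0]. Pr [3,1,0] x = c * Pd x))"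
    apply (rule propl)
      apply (simp only: Sn310 List.finite_set)
     apply (rule mp[OF spec[OF assms(5), of "[3,1,0]"] part310])
    apply (rule mp[OF spec[OF assms(6), of "[3,1,0]"] part310])
    done
  have part320: "is_partition 3 [3,2,0] \<and> ([3,2,0]::nat list) ! 0 \<le> 3 \<and> num_nonzero [3,2,0] = 2"
    by (simp add: is_partition_def num_nonzero_def)
  have P320: "(\<forall>y\<in>S_n 3 [3,2,0]. (\<Sum>x\<in>S_n 3 [3,2,0]. Pd x * chain_P (S_n 3 [3,2,0]) (ASEP_rate t 3) x y) = Pd y) \<and> (\<exists>c. c \<noteq> 0 \<and> (\<forall>x\<in>S_n 3 [3,2,0]. Pr [3,2,0] x = c * Pd x))"
    apply (rule propl)
      apply (simp only: Sn320 List.finite_set)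
     apply (rule mp[OF spec[OF assms(5), of "[3,2,0]"] part320])
    apply (rule mp[OF spec[OF assms(6), of "[3,2,0]"] part320])
    done
  have D210: "t*Pd [0,1,2] + u*Pd [1,1,0] + Pd [1,2,0] + Pd [2,0,1] + Pd [2,2,0] + Pd [3,1,0] = 2*Pd [2,1,0] + 2*(t*Pd [2,1,0]) + 2*(u*Pd [2,1,0])" by (rule lD210[OF st])
  have A210: "Pd [2,0,1] + Pd [1,2,0] + t*Pd [0,1,2] = Pd [2,1,0] + 2*(t*Pd [2,1,0])" by (rule lA210[OF conjunct1[OF P210]])
  have D201: "Pd [0,2,1] + u*Pd [1,0,1] + t*Pd [1,0,2] + Pd [2,0,2] + t*Pd [2,1,0] + Pd [3,0,1] = 3*Pd [2,0,1] + t*Pd [2,0,1] + 2*(u*Pd [2,0,1])" by (rule lD201[OF st])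
  have A201: "t*Pd [2,1,0] + t*Pd [1,0,2] + Pd [0,2,1] = 2*Pd [2,0,1] + t*Pd [2,0,1]" by (rule lA201[OF conjunct1[OF P210]])
  have D120: "t*Pd [0,2,1] + Pd [1,0,2] + u*Pd [1,1,0] + Pd [1,3,0] + t*Pd [2,1,0] + Pd [2,2,0] = 3*Pd [1,2,0] + t*Pd [1,2,0] + 2*(u*Pd [1,2,0])" by (rule lD120[OF st])
  have A120: "t*Pd [2,1,0] + Pd [1,0,2] + t*Pd [0,2,1] = 2*Pd [1,2,0] + t*Pd [1,2,0]" by (rule lA120[OF conjunct1[OF P210]])
  have D102: "Pd [0,1,2] + u*Pd [1,0,1] + Pd [1,0,3] + t*Pd [1,2,0] + Pd [2,0,1] + Pd [2,0,2] = 2*Pd [1,0,2] + 2*(t*Pd [1,0,2]) + 2*(u*Pd [1,0,2])" by (rule lD102[OF st])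
  have A102: "Pd [2,0,1] + t*Pd [1,2,0] + Pd [0,1,2] = Pd [1,0,2] + 2*(t*Pd [1,0,2])" by (rule lA102[OF conjunct1[OF P210]])
  have D021: "u*Pd [0,1,1] + Pd [0,1,2] + Pd [0,2,2] + Pd [0,3,1] + Pd [1,2,0] + t*Pd [2,0,1] = 2*Pd [0,2,1] + 2*(t*Pd [0,2,1]) + 2*(u*Pd [0,2,1])" by (rule lD021[OF st])
  have A021: "t*Pd [2,0,1] + Pd [1,2,0] + Pd [0,1,2] = Pd [0,2,1] + 2*(t*Pd [0,2,1])" by (rule lA021[OF conjunct1[OF P210]])
  have D012: "u*Pd [0,1,1] + Pd [0,1,3] + t*Pd [0,2,1] + Pd [0,2,2] + t*Pd [1,0,2] + Pd [2,1,0] = 3*Pd [0,1,2] + t*Pd [0,1,2] + 2*(u*Pd [0,1,2])" by (rule lD012[OF st])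
  have A012: "Pd [2,1,0] + t*Pd [1,0,2] + t*Pd [0,2,1] = 2*Pd [0,1,2] + t*Pd [0,1,2]" by (rule lA012[OF conjunct1[OF P210]])
  have D310: "t*Pd [0,1,3] + Pd [1,3,0] + u*Pd [2,1,0] + Pd [3,0,1] + Pd [3,2,0] = 2*Pd [3,1,0] + 2*(t*Pd [3,1,0]) + u*Pd [3,1,0]" by (rule lD310[OF st])
  have A310: "Pd [3,0,1] + Pd [1,3,0] + t*Pd [0,1,3] = Pd [3,1,0] + 2*(t*Pd [3,1,0])" by (rule lA310[OF conjunct1[OF P310]])
  have D301: "Pd [0,3,1] + t*Pd [1,0,3] + u*Pd [2,0,1] + Pd [3,0,2] + t*Pd [3,1,0] = 3*Pd [3,0,1] + t*Pd [3,0,1] + u*Pd [3,0,1]" by (rule lD301[OF st])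
  have A301: "t*Pd [3,1,0] + t*Pd [1,0,3] + Pd [0,3,1] = 2*Pd [3,0,1] + t*Pd [3,0,1]" by (rule lA301[OF conjunct1[OF P310]])
  have D130: "t*Pd [0,3,1] + Pd [1,0,3] + u*Pd [1,2,0] + Pd [2,3,0] + t*Pd [3,1,0] = 3*Pd [1,3,0] + t*Pd [1,3,0] + u*Pd [1,3,0]" by (rule lD130[OF st])
  have A130: "t*Pd [3,1,0] + Pd [1,0,3] + t*Pd [0,3,1] = 2*Pd [1,3,0] + t*Pd [1,3,0]" by (rule lA130[OF conjunct1[OF P310]])
  have D103: "Pd [0,1,3] + u*Pd [1,0,2] + t*Pd [1,3,0] + Pd [2,0,3] + Pd [3,0,1] = 2*Pd [1,0,3] + 2*(t*Pd [1,0,3]) + u*Pd [1,0,3]" by (rule lD103[OF st])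
  have A103: "Pd [3,0,1] + t*Pd [1,3,0] + Pd [0,1,3] = Pd [1,0,3] + 2*(t*Pd [1,0,3])" by (rule lA103[OF conjunct1[OF P310]])
  have D031: "Pd [0,1,3] + u*Pd [0,2,1] + Pd [0,3,2] + Pd [1,3,0] + t*Pd [3,0,1] = 2*Pd [0,3,1] + 2*(t*Pd [0,3,1]) + u*Pd [0,3,1]" by (rule lD031[OF st])
  have A031: "t*Pd [3,0,1] + Pd [1,3,0] + Pd [0,1,3] = Pd [0,3,1] + 2*(t*Pd [0,3,1])" by (rule lA031[OF conjunct1[OF P310]])
  have D013: "u*Pd [0,1,2] + Pd [0,2,3] + t*Pd [0,3,1] + t*Pd [1,0,3] + Pd [3,1,0] = 3*Pd [0,1,3] + t*Pd [0,1,3] + u*Pd [0,1,3]" by (rule lD013[OF st])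
  have A013: "Pd [3,1,0] + t*Pd [1,0,3] + t*Pd [0,3,1] = 2*Pd [0,1,3] + t*Pd [0,1,3]" by (rule lA013[OF conjunct1[OF P310]])
  have D320: "t*Pd [0,2,3] + u*Pd [2,2,0] + Pd [2,3,0] + Pd [3,0,2] + u*Pd [3,1,0] + Pd [3,3,0] = 3*Pd [3,2,0] + 2*(t*Pd [3,2,0]) + u*Pd [3,2,0]" by (rule lD320[OF st])
  have A320: "Pd [3,0,2] + Pd [2,3,0] + t*Pd [0,2,3] = Pd [3,2,0] + 2*(t*Pd [3,2,0])" by (rule lA320[OF conjunct1[OF P320]])
  have D302: "Pd [0,3,2] + u*Pd [2,0,2] + t*Pd [2,0,3] + u*Pd [3,0,1] + Pd [3,0,3] + t*Pd [3,2,0] = 4*Pd [3,0,2] + t*Pd [3,0,2] + u*Pd [3,0,2]" by (rule lD302[OF st])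
  have A302: "t*Pd [3,2,0] + t*Pd [2,0,3] + Pd [0,3,2] = 2*Pd [3,0,2] + t*Pd [3,0,2]" by (rule lA302[OF conjunct1[OF P320]])
  have D230: "t*Pd [0,3,2] + u*Pd [1,3,0] + Pd [2,0,3] + u*Pd [2,2,0] + t*Pd [3,2,0] + Pd [3,3,0] = 4*Pd [2,3,0] + t*Pd [2,3,0] + u*Pd [2,3,0]" by (rule lD230[OF st])
  have A230: "t*Pd [3,2,0] + Pd [2,0,3] + t*Pd [0,3,2] = 2*Pd [2,3,0] + t*Pd [2,3,0]" by (rule lA230[OF conjunct1[OF P320]])
  have D203: "Pd [0,2,3] + u*Pd [1,0,3] + u*Pd [2,0,2] + t*Pd [2,3,0] + Pd [3,0,2] + Pd [3,0,3] = 3*Pd [2,0,3] + 2*(t*Pd [2,0,3]) + u*Pd [2,0,3]" by (rule lD203[OF st])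
  have A203: "Pd [3,0,2] + t*Pd [2,3,0] + Pd [0,2,3] = Pd [2,0,3] + 2*(t*Pd [2,0,3])" by (rule lA203[OF conjunct1[OF P320]])
  have D032: "u*Pd [0,2,2] + Pd [0,2,3] + u*Pd [0,3,1] + Pd [0,3,3] + Pd [2,3,0] + t*Pd [3,0,2] = 3*Pd [0,3,2] + 2*(t*Pd [0,3,2]) + u*Pd [0,3,2]" by (rule lD032[OF st])
  have A032: "t*Pd [3,0,2] + Pd [2,3,0] + Pd [0,2,3] = Pd [0,3,2] + 2*(t*Pd [0,3,2])" by (rule lA032[OF conjunct1[OF P320]])
  have D023: "u*Pd [0,1,3] + u*Pd [0,2,2] + t*Pd [0,3,2] + Pd [0,3,3] + t*Pd [2,0,3] + Pd [3,2,0] = 4*Pd [0,2,3] + t*Pd [0,2,3] + u*Pd [0,2,3]" by (rule lD023[OF st])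
  have A023: "Pd [3,2,0] + t*Pd [2,0,3] + t*Pd [0,3,2] = 2*Pd [0,2,3] + t*Pd [0,2,3]" by (rule lA023[OF conjunct1[OF P320]])
  have S0: "Pd [0,1,2] = Pd [0,2,1]"
    apply (rule sym_level[where ya="Pd [0,1,1]" and yb="Pd [0,1,2]" and yc="Pd [0,1,3]" and yd="Pd [0,2,1]" and ye="Pd [0,2,2]" and yf="Pd [0,2,3]" and yg="Pd [0,3,1]" and yh="Pd [0,3,2]" and yk="Pd [0,3,3]"])
    apply (rule assms(3))
    using D012 A012 apply linarith
    using D021 A021 apply linarith
    using D013 A013 apply linarith
    using D031 A031 apply linarith
    using D023 A023 apply linarith
    using D032 A032 apply linarith
    done
  have S1: "Pd [1,0,2] = Pd [2,0,1]"
    apply (rule sym_level[where ya="Pd [1,0,1]" and yb="Pd [1,0,2]" and yc="Pd [1,0,3]" and yd="Pd [2,0,1]" and ye="Pd [2,0,2]" and yf="Pd [2,0,3]" and yg="Pd [3,0,1]" and yh="Pd [3,0,2]" and yk="Pd [3,0,3]"])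
    apply (rule assms(3))
    using D102 A102 apply linarith
    using D201 A201 apply linarith
    using D103 A103 apply linarith
    using D301 A301 apply linarith
    using D203 A203 apply linarith
    using D302 A302 apply linarith
    done
  have S2: "Pd [1,2,0] = Pd [2,1,0]"
    apply (rule sym_level[where ya="Pd [1,1,0]" and yb="Pd [1,2,0]" and yc="Pd [1,3,0]" and yd="Pd [2,1,0]" and ye="Pd [2,2,0]" and yf="Pd [2,3,0]" and yg="Pd [3,1,0]" and yh="Pd [3,2,0]" and yk="Pd [3,3,0]"])
    apply (rule assms(3))
    using D120 A120 apply linarith
    using D210 A210 apply linarith
    using D130 A130 apply linarith
    using D310 A310 apply linarith
    using D230 A230 apply linarith
    using D320 A320 apply linarith
    done
  have Z1: "t * Pd [2,1,0] = Pd [2,1,0]" using A210 A120 unfolding S0 S1 S2 by linarith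
  have Z2: "t * Pd [0,2,1] = Pd [0,2,1]" using A021 A012 unfolding S0 S1 S2 by linarith
  have Z3: "t * Pd [2,0,1] = Pd [2,0,1]" using A201 A102 unfolding S0 S1 S2 by linarith
  have zz: "\<And>c. t * c = c \<Longrightarrow> c = 0"
  proof -
    fix c assume "t * c = c"
    then have "(t - 1) * c = 0" by (simp add: algebra_simps)
    then show "c = 0" using tne by simp
  qed
  have Z: "Pd [2,1,0] = 0" "Pd [0,2,1] = 0" "Pd [2,0,1] = 0"
    using zz[OF Z1] zz[OF Z2] zz[OF Z3] by auto
  obtain c where c: "\<forall>x\<in>S_n 3 [2,1,0]. Pr [2,1,0] x = c * Pd x" using P210 by blast
  have "stationary (S_n 3 [2,1,0]) (ASEP_rate t 3) (Pr [2,1,0])"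
    by (rule mp[OF spec[OF assms(5), of "[2,1,0]"] part210])
  then have "sum (Pr [2,1,0]) (S_n 3 [2,1,0]) = 1" unfolding stationary_def by blast
  moreover have "sum (Pr [2,1,0]) (S_n 3 [2,1,0]) = sum (\<lambda>x. c * Pd x) (S_n 3 [2,1,0])"
    using c by (intro sum.cong) auto
  moreover have "sum (\<lambda>x. c * Pd x) (S_n 3 [2,1,0]) = 0"
    using S0 S1 S2 Z unfolding Sn210 by simp
  ultimately show False by simp
qed

end
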